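(* Let $g(x)=1-(1-x^2)^4$ for $|x|\le1$ and $g(x)=1$ otherwise. Fix $0<p_o<\widetilde{p_o}<2$ and let $(q,p)$, respectively $(\widetilde q,\widetilde p)$, be the global solutions of $\dot q=p$, $\dot p=-g'(q)$ with initial data $(0,p_o)$, respectively $(0,\widetilde{p_o})$. Then: (i) if $p_o\in]0,\sqrt2[$, then $q(t)<\widetilde q(t)$ for all $t\in]0,\mathcal{T}(p_o)/2]$; (ii) if $p_o\in[\sqrt2,2[$, then $q(t)<\widetilde q(t)$ for all $t\in]0,+\infty[$.
   Context: For $p_o\in]0,\sqrt2[$, the solution $q$ of $\dot q=p$, $\dot p=-g'(q)$ with $(q(0),p(0))=(0,p_o)$ is periodic, and $\mathcal{T}(p_o)$ denotes its smallest period. *)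

theory Defs
  imports "HOL-Analysis.Analysis"
begin

definition g :: "real \<Rightarrow> real" where
  "g x = (if \<bar>x\<bar> \<le> 1 then 1 - (1 - x\<^sup>2) ^ 4 else 1)"

definition is_global_solution :: "real \<Rightarrow> (real \<Rightarrow> real) \<Rightarrow> (real \<Rightarrow> real) \<Rightarrow> bool" where
  "is_global_solution p0 q p \<longleftrightarrow>
     q 0 = 0 \<and> p 0 = p0 \<and>
     (\<forall>t. (q has_real_derivative p t) (at t)) \<and>
     (\<forall>t. (p has_real_derivative - deriv g (q t)) (at t))"

definition smallest_period :: "(real \<Rightarrow> real) \<Rightarrow> real" where
  "smallest_period f = (LEAST T. T > 0 \<and> (\<forall>t. f (t + T) = f t))"

end

theory Submission
  imports Defs
begin


definition G :: "real \<Rightarrow> real" where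
  "G x = (if \<bar>x\<bar> \<le> 1 then 8 * x * (1 - x\<^sup>2) ^ 3 else 0)"

lemma g_alt: "g = (\<lambda>x. if x \<in> {-1..1} then 1 - (1 - x\<^sup>2) ^ 4 else 1)"
  by (auto simp: g_def fun_eq_iff abs_le_iff)

lemma poly_deriv: "((\<lambda>x::real. 1 - (1 - x\<^sup>2) ^ 4) has_real_derivative 8 * x * (1 - x\<^sup>2) ^ 3) (at x)"
  by (auto intro!: derivative_eq_intros simp: algebra_simps)

lemma closure_T: "closure (- {-1..1::real}) = {..-1} \<union> {1..}"
proof -
  have "- {-1..1::real} = {..< -1} \<union> {1<..}" by auto
  then show ?thesis by (simp add: closure_Un)
qed

lemma g_deriv: "(g has_real_derivative G x) (at x)"
proof -
  let ?S = "{-1..1::real}" and ?T = "- {-1..1::real}"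
  have cl: "closure ?S \<inter> closure ?T = {-1, 1}" unfolding closure_T by auto
  have "((\<lambda>x. if x \<in> ?S then 1 - (1 - x\<^sup>2) ^ 4 else 1) has_derivative
      (if x \<in> ?S then (*) (8 * x * (1 - x\<^sup>2) ^ 3) else (*) 0)) (at x within (?S \<union> ?T))"
  proof (rule has_derivative_If_within_closures)
    show "((\<lambda>x. 1 - (1 - x\<^sup>2) ^ 4) has_derivative (*) (8 * x * (1 - x\<^sup>2) ^ 3))
         (at x within ?S \<union> (closure ?S \<inter> closure ?T))"
      using poly_deriv[of x] unfolding has_field_derivative_def by (rule has_derivative_at_withinI)
    show "((\<lambda>x. 1) has_derivative (*) 0) (at x within ?T \<union> (closure ?S \<inter> closure ?T))"
      proof -
        have "(*) (0::real) = (\<lambda>x. 0)" by (simp add: fun_eq_iff)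
        then show ?thesis using has_derivative_const[of "1::real"] by simp
      qed
    show "1 - (1 - x\<^sup>2) ^ 4 = 1" if "x \<in> closure ?S" "x \<in> closure ?T"
    proof -
      have "x \<in> {-1, 1}" using that cl by blast
      then show ?thesis by auto
    qed
    show "(*) (8 * x * (1 - x\<^sup>2) ^ 3) = (*) 0" if "x \<in> closure ?S" "x \<in> closure ?T"
    proof -
      have "x \<in> {-1, 1}" using that cl by blast
      then show ?thesis by auto
    qed
  qed auto
  moreover have "?S \<union> ?T = UNIV" by auto
  ultimately have "((\<lambda>x. if x \<in> ?S then 1 - (1 - x\<^sup>2) ^ 4 else 1) has_derivative
      (*) (G x)) (at x)"
    by (cases "x \<in> ?S") (auto simp: G_def abs_le_iff)
  then show ?thesis
    unfolding g_alt has_field_derivative_def .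
qed



definition P :: "real \<Rightarrow> real" where "P x = 8 * x * (1 - x\<^sup>2) ^ 3"

lemma P_deriv: "(P has_real_derivative 8 * (1 - x\<^sup>2)^2 * (1 - 7 * x\<^sup>2)) (at x)"
  unfolding P_def by (auto intro!: derivative_eq_intros simp: algebra_simps power2_eq_square power3_eq_cube)

lemma P_deriv_bound: fixes z :: real assumes "\<bar>z\<bar> \<le> 1" shows "\<bar>8 * (1 - z\<^sup>2)^2 * (1 - 7 * z\<^sup>2)\<bar> \<le> 56"
proof -
  have w: "0 \<le> z\<^sup>2" "z\<^sup>2 \<le> 1" using assms by (auto simp: abs_square_le_1)
  have a: "(1 - z\<^sup>2)^2 \<le> 1" using w by (simp add: power_le_one)
  have b: "\<bar>1 - 7 * z\<^sup>2\<bar> \<le> 7" using w by arith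
  have "\<bar>8 * (1 - z\<^sup>2)^2 * (1 - 7 * z\<^sup>2)\<bar> = 8 * (1 - z\<^sup>2)^2 * \<bar>1 - 7 * z\<^sup>2\<bar>"
    by (simp add: abs_mult)
  also have "\<dots> \<le> 8 * 1 * 7" using a b by (intro mult_mono) auto
  finally show ?thesis by simp
qed

lemma P_lip: assumes "\<bar>a\<bar> \<le> 1" "\<bar>b\<bar> \<le> 1" shows "\<bar>P a - P b\<bar> \<le> 56 * \<bar>a - b\<bar>"
proof -
  have *: "\<bar>P y - P x\<bar> \<le> 56 * \<bar>y - x\<bar>" if "x < y" "\<bar>x\<bar> \<le> 1" "\<bar>y\<bar> \<le> 1" for x y
  proof -
    obtain z where z: "x < z" "z < y" "P y - P x = (y - x) * (8 * (1 - z\<^sup>2)^2 * (1 - 7 * z\<^sup>2))"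
      using MVT2[OF \<open>x < y\<close>, of P "\<lambda>x. 8 * (1 - x\<^sup>2)^2 * (1 - 7 * x\<^sup>2)"] P_deriv by blast
    have "\<bar>z\<bar> \<le> 1" using z that by auto
    then have "\<bar>8 * (1 - z\<^sup>2)^2 * (1 - 7 * z\<^sup>2)\<bar> \<le> 56" by (rule P_deriv_bound)
    then have "(y - x) * \<bar>8 * (1 - z\<^sup>2)^2 * (1 - 7 * z\<^sup>2)\<bar> \<le> (y - x) * 56"
      using that by (intro mult_left_mono) auto
    moreover have "\<bar>P y - P x\<bar> = (y - x) * \<bar>8 * (1 - z\<^sup>2)^2 * (1 - 7 * z\<^sup>2)\<bar>"
      using z(3) that by (simp add: abs_mult)
    ultimately show ?thesis using that by simp
  qed
  show ?thesis
    using *[of a b] *[of b a] assms by (cases a b rule: linorder_cases) (auto simp: abs_minus_commute)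
qed

definition clamp :: "real \<Rightarrow> real" where "clamp x = max (-1) (min 1 x)"

lemma G_clamp: "G x = P (clamp x)"
  by (auto simp: G_def P_def clamp_def max_def min_def)

lemma G_lip: "\<bar>G a - G b\<bar> \<le> 56 * \<bar>a - b\<bar>"
proof -
  have "\<bar>G a - G b\<bar> \<le> 56 * \<bar>clamp a - clamp b\<bar>"
    unfolding G_clamp by (rule P_lip) (auto simp: clamp_def)
  also have "\<dots> \<le> 56 * \<bar>a - b\<bar>" by (auto simp: clamp_def max_def min_def)
  finally show ?thesis .
qed

lemma G_odd: "G (- x) = - G x"
  by (simp add: G_def)

lemma deriv_g: "deriv g = G"
  using g_deriv DERIV_imp_deriv by blast

definition sol :: "(real \<Rightarrow> real) \<Rightarrow> (real \<Rightarrow> real) \<Rightarrow> bool" where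
  "sol q p \<longleftrightarrow> (\<forall>t. (q has_real_derivative p t) (at t)) \<and> (\<forall>t. (p has_real_derivative - G (q t)) (at t))"

lemma global_sol: "is_global_solution p0 q p \<Longrightarrow> sol q p \<and> q 0 = 0 \<and> p 0 = p0"
  by (simp add: is_global_solution_def sol_def deriv_g)

lemma uniq:
  assumes s1: "sol q1 p1" and s2: "sol q2 p2" and e: "q1 t0 = q2 t0" "p1 t0 = p2 t0"
  shows "q1 t = q2 t \<and> p1 t = p2 t"
proof -
  define u where "u t = (q1 t - q2 t)\<^sup>2 + (p1 t - p2 t)\<^sup>2" for t
  define u' where "u' t = 2 * (q1 t - q2 t) * (p1 t - p2 t) + 2 * (p1 t - p2 t) * (G (q2 t) - G (q1 t))" for t
  have du: "(u has_real_derivative u' t) (at t)" for t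
    using s1 s2 unfolding sol_def u_def u'_def
    by (auto intro!: derivative_eq_intros simp: algebra_simps)
  have bd: "\<bar>u' t\<bar> \<le> 57 * u t" for t
  proof -
    let ?a = "q1 t - q2 t" and ?b = "p1 t - p2 t"
    have l: "\<bar>G (q2 t) - G (q1 t)\<bar> \<le> 56 * \<bar>?a\<bar>" using G_lip[of "q2 t" "q1 t"] by (simp add: abs_minus_commute)
    have "\<bar>u' t\<bar> \<le> 2 * \<bar>?a\<bar> * \<bar>?b\<bar> + 2 * \<bar>?b\<bar> * \<bar>G (q2 t) - G (q1 t)\<bar>"
    proof -
      have "\<bar>u' t\<bar> \<le> \<bar>2 * ?a * ?b\<bar> + \<bar>2 * ?b * (G (q2 t) - G (q1 t))\<bar>"
        unfolding u'_def by (rule abs_triangle_ineq)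
      then show ?thesis by (simp only: abs_mult abs_numeral)
    qed
    also have "\<dots> \<le> 2 * \<bar>?a\<bar> * \<bar>?b\<bar> + 2 * \<bar>?b\<bar> * (56 * \<bar>?a\<bar>)"
      using l by (intro add_left_mono mult_left_mono) auto
    also have "\<dots> = 57 * (2 * \<bar>?a\<bar> * \<bar>?b\<bar>)" by simp
    also have "2 * \<bar>?a\<bar> * \<bar>?b\<bar> \<le> u t"
      unfolding u_def using sum_squares_bound[of "\<bar>?a\<bar>" "\<bar>?b\<bar>"] by (simp add: power2_abs)
    finally show ?thesis by simp
  qed
  have u0: "u t0 = 0" using e by (simp add: u_def)
  have upos: "u s \<ge> 0" for s by (simp add: u_def)
  have "u t = 0"
  proof (cases "t0 \<le> t")
    case True
    define v where "v s = u s * exp (- 57 * s)" for s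
    have "v t \<le> v t0"
    proof (rule DERIV_nonpos_imp_nonincreasing[OF True])
      fix x
      have "(v has_real_derivative (u' x - 57 * u x) * exp (- 57 * x)) (at x)"
        unfolding v_def using du[of x] by (auto intro!: derivative_eq_intros simp: algebra_simps)
      moreover have "(u' x - 57 * u x) * exp (- 57 * x) \<le> 0"
        using bd[of x] by (intro mult_nonpos_nonneg) auto
      ultimately show "\<exists>y. (v has_real_derivative y) (at x) \<and> y \<le> 0" by blast
    qed
    then have "u t * exp (- 57 * t) \<le> 0" using u0 by (simp add: v_def)
    then show ?thesis using upos[of t] by (simp add: mult_le_0_iff)
  next
    case False
    then have le: "t \<le> t0" by simp
    define v where "v s = u s * exp (57 * s)" for s
    have "v t \<le> v t0"
    proof (rule DERIV_nonneg_imp_nondecreasing[OF le])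
      fix x
      have "(v has_real_derivative (u' x + 57 * u x) * exp (57 * x)) (at x)"
        unfolding v_def using du[of x] by (auto intro!: derivative_eq_intros simp: algebra_simps)
      moreover have "(u' x + 57 * u x) * exp (57 * x) \<ge> 0"
        using bd[of x] by (intro mult_nonneg_nonneg) auto
      ultimately show "\<exists>y. (v has_real_derivative y) (at x) \<and> y \<ge> 0" by blast
    qed
    then have "u t * exp (57 * t) \<le> 0" using u0 by (simp add: v_def)
    then show ?thesis using upos[of t] by (simp add: mult_le_0_iff)
  qed
  then show ?thesis unfolding u_def by (simp add: add_nonneg_eq_0_iff)
qed



lemma g0: "g 0 = 0" by (simp add: g_def)

lemma energy:
  assumes "sol q p"
  shows "(p t)\<^sup>2 + 2 * g (q t) = (p 0)\<^sup>2 + 2 * g (q 0)"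
proof -
  have "\<forall>x. ((\<lambda>t. (p t)\<^sup>2 + 2 * g (q t)) has_real_derivative 0) (at x)"
  proof
    fix x
    have "((\<lambda>t. (p t)\<^sup>2 + 2 * g (q t)) has_real_derivative
        2 * p x * (- G (q x)) + 2 * (G (q x) * p x)) (at x)"
      using assms unfolding sol_def
      by (auto intro!: derivative_eq_intros DERIV_chain2[OF g_deriv] simp: power2_eq_square)
    then show "((\<lambda>t. (p t)\<^sup>2 + 2 * g (q t)) has_real_derivative 0) (at x)"
      by (simp add: algebra_simps)
  qed
  then show ?thesis by (rule DERIV_isconst_all)
qed

lemma cont_neg:
  fixes f :: "real \<Rightarrow> real"
  assumes "isCont f x" "f x < 0"
  shows "\<exists>e>0. \<forall>y. \<bar>y - x\<bar> < e \<longrightarrow> f y < 0"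
proof -
  have "\<forall>\<^sub>F y in at x. f y < 0"
    using order_tendstoD(2)[OF assms(1)[unfolded isCont_def] assms(2)] .
  then obtain e where "e > 0" "\<And>y. y \<noteq> x \<Longrightarrow> dist y x < e \<Longrightarrow> f y < 0"
    by (auto simp: eventually_at)
  then show ?thesis using assms(2) by (metis dist_real_def)
qed

lemma touch:
  fixes d d' :: "real \<Rightarrow> real"
  assumes der: "\<And>t. (d has_real_derivative d' t) (at t)"
    and ab: "a < b" and da: "d a = 0"
    and z: "\<And>t. a \<le> t \<Longrightarrow> t < b \<Longrightarrow> d t = 0 \<Longrightarrow> d' t > 0"
  shows "a < t \<Longrightarrow> t < b \<Longrightarrow> d t > 0"
proof (rule ccontr)
  assume at: "a < t" "t < b" and nt: "\<not> d t > 0"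
  have cont: "isCont d x" for x using der DERIV_isCont by blast
  obtain e where e: "e > 0" "\<And>h. h > 0 \<Longrightarrow> h < e \<Longrightarrow> d a < d (a + h)"
    using DERIV_pos_inc_right[OF der[of a] z[OF order_refl ab da]] by blast
  define mm where "mm = min e (t - a)"
  define c where "c = a + mm / 2"
  have m: "mm \<le> t - a" "mm \<le> e" "mm > 0" using e at by (auto simp: mm_def)
  have c1: "a < c" using m unfolding c_def by linarith
  have c2: "c < t" using m unfolding c_def by linarith
  note c = c1 c2
  have "d c > 0" using e(2)[of "mm / 2"] m da by (simp add: c_def)
  note c = c this
  define K where "K = {c..t} \<inter> {x. d x = 0}"
  have "\<exists>x\<ge>c. x \<le> t \<and> d x = 0"
    using IVT2[of d t 0 c] c nt cont by auto
  then have Kne: "K \<noteq> {}" by (auto simp: K_def)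
  have Kcl: "closed K" unfolding K_def
    by (intro closed_Int closed_atLeastAtMost closed_Collect_eq continuous_on_const)
       (simp add: continuous_at_imp_continuous_on cont)
  have Kbd: "bdd_below K" by (auto simp: K_def bdd_below_def)
  define t1 where "t1 = Inf K"
  have t1K: "t1 \<in> K" using closed_contains_Inf[OF Kne Kbd Kcl] by (simp add: t1_def)
  then have t1: "c \<le> t1" "t1 \<le> t" "d t1 = 0" by (auto simp: K_def)
  have t1min: "t1 \<le> x" if "x \<in> K" for x using that Kbd by (simp add: t1_def cInf_lower)
  obtain e2 where e2: "e2 > 0" "\<And>h. h > 0 \<Longrightarrow> h < e2 \<Longrightarrow> d (t1 - h) < d t1"
    using DERIV_pos_inc_left[OF der[of t1] z[of t1]] t1 c at by force
  define m3 where "m3 = min e2 (t1 - a)"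
  define x where "x = t1 - m3 / 2"
  have m2: "m3 \<le> t1 - a" "m3 \<le> e2" "m3 > 0" using e2 t1 c by (auto simp: m3_def)
  have x1: "a < x" using m2 unfolding x_def by linarith
  have x2: "x < t1" using m2 unfolding x_def by linarith
  note x = x1 x2
  have "d x < 0" using e2(2)[of "m3 / 2"] m2 t1 by (simp add: x_def)
  note x = x this
  show False
  proof (cases "x < c")
    case True
    have "x - a < e" using True m by (simp add: c_def)
    then have "d a < d (a + (x - a))" using e(2)[of "x - a"] x by auto
    then show False using x da by simp
  next
    case False
    then obtain y where "y \<ge> c" "y \<le> x" "d y = 0"
      using IVT2[of d x 0 c] c x cont by auto
    then have "y \<in> K" using x t1 by (auto simp: K_def)
    then show False using t1min \<open>y \<le> x\<close> x by fastforce
  qed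
qed



lemma g_lt1: "\<bar>x\<bar> < 1 \<Longrightarrow> g x < 1"
proof -
  assume a: "\<bar>x\<bar> < 1"
  then have "x\<^sup>2 < 1" by (simp add: abs_square_less_1)
  then have "(1 - x\<^sup>2) ^ 4 > 0" by simp
  then show ?thesis using a by (simp add: g_def)
qed

lemma g_ge1: "\<bar>x\<bar> \<ge> 1 \<Longrightarrow> g x = 1"
proof -
  assume a: "\<bar>x\<bar> \<ge> 1"
  show ?thesis
  proof (cases "\<bar>x\<bar> = 1")
    case True
    have "x\<^sup>2 = \<bar>x\<bar>\<^sup>2" by simp
    then have "x\<^sup>2 = 1" using True by simp
    then show ?thesis by (simp add: g_def)
  qed (use a in \<open>simp add: g_def\<close>)
qed

lemma G_ge1: "\<bar>x\<bar> \<ge> 1 \<Longrightarrow> G x = 0"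
proof -
  assume a: "\<bar>x\<bar> \<ge> 1"
  show ?thesis
  proof (cases "\<bar>x\<bar> = 1")
    case True
    have "x\<^sup>2 = \<bar>x\<bar>\<^sup>2" by simp
    then have "x\<^sup>2 = 1" using True by simp
    then show ?thesis by (simp add: G_def)
  qed (use a in \<open>simp add: G_def\<close>)
qed

lemma energy0:
  assumes "sol q p" "q 0 = 0" "p 0 = p0"
  shows "(p t)\<^sup>2 + 2 * g (q t) = p0\<^sup>2"
  using energy[OF assms(1), of t] assms by (simp add: g0)

lemma p_pos_above:
  assumes s: "sol q p" and i: "q 0 = 0" "p 0 = p0" and p0: "2 \<le> p0\<^sup>2" "0 < p0"
  shows "p t > 0"
proof -
  have nz: "p s \<noteq> 0" for s
  proof
    assume ps: "p s = 0"
    then have "2 * g (q s) = p0\<^sup>2" using energy0[OF s i, of s] by simp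
    then have "g (q s) \<ge> 1" using p0 by simp
    then have qs: "\<bar>q s\<bar> \<ge> 1" using g_lt1[of "q s"] by linarith
    have "sol (\<lambda>_. q s) (\<lambda>_. 0)"
      unfolding sol_def using G_ge1[OF qs] by simp
    from uniq[OF s this, of s 0] ps have "q 0 = q s" by simp
    then show False using qs i by simp
  qed
  have cont: "isCont p x" for x using s unfolding sol_def using DERIV_isCont by blast
  show ?thesis
  proof (rule ccontr)
    assume "\<not> p t > 0"
    then have pt: "p t \<le> 0" by simp
    show False
    proof (cases "0 \<le> t")
      case True
      have "\<exists>x\<ge>0. x \<le> t \<and> p x = 0" using IVT2[of p t 0 0] pt i p0 cont True by simp
      then obtain x where "p x = 0" by blast
      then show False using nz by blast
    next
      case False
      have "\<exists>x\<ge>t. x \<le> 0 \<and> p x = 0" using IVT[of p t 0 0] pt i p0 cont False by simp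
      then obtain x where "p x = 0" by blast
      then show False using nz by blast
    qed
  qed
qed

lemma cmp:
  assumes s: "sol q p" "q 0 = 0" "p 0 = p0" and s': "sol q' p'" "q' 0 = 0" "p' 0 = p0'"
    and pp: "0 < p0" "p0 < p0'" and b: "0 < b" and pos: "\<And>t. 0 \<le> t \<Longrightarrow> t < b \<Longrightarrow> p' t > 0"
  shows "0 < t \<Longrightarrow> t < b \<Longrightarrow> q t < q' t"
proof -
  assume t: "0 < t" "t < b"
  have der: "((\<lambda>t. q' t - q t) has_real_derivative p' t - p t) (at t)" for t
    using s(1) s'(1) unfolding sol_def by (auto intro!: derivative_eq_intros)
  have "q' t - q t > 0"
  proof (rule touch[where d = "\<lambda>t. q' t - q t", OF der b])
    show "q' 0 - q 0 = 0" using s s' by simp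
    fix x assume x: "0 \<le> x" "x < b" "q' x - q x = 0"
    have sq: "p0\<^sup>2 < p0'\<^sup>2" using pp by (simp add: power_strict_mono)
    have "g (q' x) = g (q x)" using x(3) by simp
    then have "(p x)\<^sup>2 < (p' x)\<^sup>2"
      using energy0[OF s, of x] energy0[OF s', of x] sq by linarith
    then show "p' x - p x > 0" using power2_less_imp_less[of "p x" "p' x"] pos[OF x(1,2)] by simp
  next
    show "0 < t" "t < b" using t by simp_all
  qed
  then show ?thesis by simp
qed



lemma below:
  assumes s: "sol q p" and i: "q 0 = 0" "p 0 = p0" and p0: "0 < p0" "p0\<^sup>2 < 2"
  shows "\<exists>\<tau> A. 0 < \<tau> \<and> 0 < A \<and> A < 1 \<and> q \<tau> = A \<and> p \<tau> = 0 \<and> 2 * g A = p0\<^sup>2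
     \<and> (\<forall>t. 0 \<le> t \<and> t < \<tau> \<longrightarrow> p t > 0) \<and> (\<forall>t. q t = q (2 * \<tau> - t))
     \<and> smallest_period q = 4 * \<tau> \<and> strict_mono_on {0..\<tau>} q"
proof -
  have dq: "(q has_real_derivative p t) (at t)" for t using s by (simp add: sol_def)
  have dp: "(p has_real_derivative - G (q t)) (at t)" for t using s by (simp add: sol_def)
  have cq: "isCont q t" for t using dq DERIV_isCont by blast
  have cp: "isCont p t" for t using dp DERIV_isCont by blast
  have en: "(p t)\<^sup>2 + 2 * g (q t) = p0\<^sup>2" for t using energy0[OF s i] .
  have g2: "2 * g (q t) \<le> p0\<^sup>2" for t using en[of t] by (metis le_add_same_cancel2 zero_le_power2)
  have q1: "\<bar>q t\<bar> < 1" for t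
  proof (rule ccontr)
    assume "\<not> \<bar>q t\<bar> < 1"
    then have "g (q t) = 1" using g_ge1 by simp
    then show False using g2[of t] p0 by simp
  qed
  define \<kappa> where "\<kappa> = 1 - p0\<^sup>2 / 2"
  have \<kappa>: "\<kappa> > 0" using p0 by (simp add: \<kappa>_def)
  have low: "(1 - (q t)\<^sup>2) ^ 3 \<ge> \<kappa>" for t
  proof -
    have a: "0 \<le> 1 - (q t)\<^sup>2" "1 - (q t)\<^sup>2 \<le> 1" using q1[of t] by (auto simp: abs_square_le_1 less_imp_le)
    have "g (q t) = 1 - (1 - (q t)\<^sup>2) ^ 4" using q1[of t] by (simp add: g_def)
    then have "(1 - (q t)\<^sup>2) ^ 4 \<ge> \<kappa>" using g2[of t] by (simp add: \<kappa>_def)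
    moreover have "(1 - (q t)\<^sup>2) ^ 4 \<le> (1 - (q t)\<^sup>2) ^ 3"
      using a by (intro power_decreasing) auto
    ultimately show ?thesis by linarith
  qed
  have Gq: "G (q t) = 8 * q t * (1 - (q t)\<^sup>2) ^ 3" for t using q1[of t] by (simp add: G_def)
  have ex: "\<exists>t>0. p t = 0"
  proof (rule ccontr)
    assume "\<not> (\<exists>t>0. p t = 0)"
    then have nz: "t > 0 \<Longrightarrow> p t \<noteq> 0" for t by blast
    have ppos: "p t > 0" if "t \<ge> 0" for t
    proof (rule ccontr)
      assume "\<not> p t > 0"
      then have "p t \<le> 0" by simp
      then have "\<exists>x\<ge>0. x \<le> t \<and> p x = 0" using IVT2[of p t 0 0] i p0 cp that by simp
      then obtain x where x: "x \<ge> 0" "p x = 0" by blast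
      then have "x \<noteq> 0" using i p0 by auto
      then show False using nz[of x] x by simp
    qed
    have qa: "q 0 < q 1"
    proof (rule DERIV_pos_imp_increasing[of 0 1 q])
      fix x :: real assume "0 \<le> x" "x \<le> 1"
      then show "\<exists>y. (q has_real_derivative y) (at x) \<and> y > 0" using dq[of x] ppos[of x] by blast
    qed simp
    then have qa: "q 1 > 0" using i by simp
    have qmono: "q 1 \<le> q t" if "1 \<le> t" for t
    proof (rule DERIV_nonneg_imp_nondecreasing[OF that])
      fix x :: real assume "1 \<le> x" "x \<le> t"
      then have "p x \<ge> 0" using ppos[of x] by simp
      then show "\<exists>y. (q has_real_derivative y) (at x) \<and> y \<ge> 0" using dq[of x] by blast
    qed
    define m where "m = 8 * q 1 * \<kappa>"
    have m: "m > 0" using qa \<kappa> by (simp add: m_def)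
    have Gb: "G (q t) \<ge> m" if "1 \<le> t" for t
    proof -
      have "8 * q 1 * \<kappa> \<le> 8 * q t * (1 - (q t)\<^sup>2) ^ 3"
        using qmono[OF that] low[of t] qa \<kappa> by (intro mult_mono) auto
      then show ?thesis by (simp add: m_def Gq)
    qed
    define T where "T = 1 + (p 1 + 1) / m"
    have T: "1 \<le> T" using m ppos[of 1] by (simp add: T_def)
    have "p T + m * T \<le> p 1 + m * 1"
    proof (rule DERIV_nonpos_imp_nonincreasing[OF T])
      fix x assume x: "1 \<le> x" "x \<le> T"
      have "((\<lambda>t. p t + m * t) has_real_derivative - G (q x) + m) (at x)"
        using dp[of x] by (auto intro!: derivative_eq_intros)
      then show "\<exists>y. ((\<lambda>t. p t + m * t) has_real_derivative y) (at x) \<and> y \<le> 0"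
        using Gb[OF x(1)] by auto
    qed
    moreover have "m * T = m + (p 1 + 1)" using m by (simp add: T_def field_simps)
    ultimately have "p T \<le> -1" by simp
    then show False using ppos[of T] T by simp
  qed
  define Z where "Z = {0..} \<inter> {t. p t = 0}"
  obtain t0 where "t0 > 0" "p t0 = 0" using ex by blast
  then have "t0 \<in> Z" by (simp add: Z_def)
  then have Zne: "Z \<noteq> {}" by blast
  have Zcl: "closed Z" unfolding Z_def
    by (intro closed_Int closed_atLeast closed_Collect_eq continuous_on_const)
       (simp add: continuous_at_imp_continuous_on cp)
  have Zbd: "bdd_below Z" by (auto simp: Z_def bdd_below_def)
  define \<tau> where "\<tau> = Inf Z"
  have "\<tau> \<in> Z" using closed_contains_Inf[OF Zne Zbd Zcl] by (simp add: \<tau>_def)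
  then have \<tau>0: "\<tau> \<ge> 0" "p \<tau> = 0" by (auto simp: Z_def)
  have \<tau>min: "\<tau> \<le> x" if "x \<in> Z" for x using that Zbd by (simp add: \<tau>_def cInf_lower)
  have \<tau>pos: "\<tau> > 0" using \<tau>0 i p0 by (cases "\<tau> = 0") auto
  have ppos: "p t > 0" if "0 \<le> t" "t < \<tau>" for t
  proof (rule ccontr)
    assume "\<not> p t > 0"
    then have "p t \<le> 0" by simp
    then have "\<exists>x\<ge>0. x \<le> t \<and> p x = 0" using IVT2[of p t 0 0] i p0 cp that by simp
    then obtain x where x: "x \<ge> 0" "x \<le> t" "p x = 0" by blast
    then have "x \<in> Z" by (simp add: Z_def)
    then show False using \<tau>min[of x] x that by simp
  qed
  have smono: "strict_mono_on {0..\<tau>} q"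
  proof (rule strict_mono_onI)
    fix x y assume xy: "x \<in> {0..\<tau>}" "y \<in> {0..\<tau>}" "x < y"
    show "q x < q y"
    proof (rule DERIV_pos_imp_increasing_open[OF xy(3)])
      fix z assume "x < z" "z < y"
      then have "0 \<le> z" "z < \<tau>" using xy by auto
      then show "\<exists>d. (q has_real_derivative d) (at z) \<and> 0 < d" using dq[of z] ppos[of z] by blast
    next
      show "continuous_on {x..y} q" by (simp add: continuous_at_imp_continuous_on cq)
    qed
  qed
  define A where "A = q \<tau>"
  have "q 0 < q \<tau>" using strict_mono_onD[OF smono, of 0 \<tau>] \<tau>pos by simp
  then have A0: "A > 0" using i by (simp add: A_def)
  have A1: "A < 1" using q1[of \<tau>] A0 by (simp add: A_def)
  have gA: "2 * g A = p0\<^sup>2" using en[of \<tau>] \<tau>0 by (simp add: A_def)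
  have solh: "sol (\<lambda>s. q (2 * \<tau> - s)) (\<lambda>s. - p (2 * \<tau> - s))"
    unfolding sol_def
  proof (intro conjI allI)
    fix t
    have "((\<lambda>s. q (2 * \<tau> - s)) has_real_derivative p (2 * \<tau> - t) * (-1)) (at t)"
      by (rule DERIV_chain2[of q, OF dq]) (auto intro!: derivative_eq_intros)
    then show "((\<lambda>s. q (2 * \<tau> - s)) has_real_derivative - p (2 * \<tau> - t)) (at t)" by simp
    have "((\<lambda>s. p (2 * \<tau> - s)) has_real_derivative - G (q (2 * \<tau> - t)) * (-1)) (at t)"
      by (rule DERIV_chain2[of p, OF dp]) (auto intro!: derivative_eq_intros)
    from DERIV_minus[OF this] show "((\<lambda>s. - p (2 * \<tau> - s)) has_real_derivative - G (q (2 * \<tau> - t))) (at t)"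
      by simp
  qed
  have sym: "q t = q (2 * \<tau> - t) \<and> p t = - p (2 * \<tau> - t)" for t
    using uniq[OF s solh, of \<tau> t] \<tau>0 by simp
  have q2: "q (2 * \<tau>) = 0" using sym[of 0] i by simp
  have p2: "p (2 * \<tau>) = - p0" using sym[of "2 * \<tau>"] i by simp
  have solt: "sol (\<lambda>s. - q (2 * \<tau> + s)) (\<lambda>s. - p (2 * \<tau> + s))"
    unfolding sol_def
  proof (intro conjI allI)
    fix t
    have "((\<lambda>s. q (2 * \<tau> + s)) has_real_derivative p (2 * \<tau> + t) * 1) (at t)"
      by (rule DERIV_chain2[of q, OF dq]) (auto intro!: derivative_eq_intros)
    from DERIV_minus[OF this] show "((\<lambda>s. - q (2 * \<tau> + s)) has_real_derivative - p (2 * \<tau> + t)) (at t)"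
      by simp
    have "((\<lambda>s. p (2 * \<tau> + s)) has_real_derivative - G (q (2 * \<tau> + t)) * 1) (at t)"
      by (rule DERIV_chain2[of p, OF dp]) (auto intro!: derivative_eq_intros)
    from DERIV_minus[OF this] have "((\<lambda>s. - p (2 * \<tau> + s)) has_real_derivative G (q (2 * \<tau> + t))) (at t)"
      by simp
    then show "((\<lambda>s. - p (2 * \<tau> + s)) has_real_derivative - G (- q (2 * \<tau> + t))) (at t)"
      by (simp add: G_odd)
  qed
  have anti: "q t = - q (2 * \<tau> + t)" for t
    using uniq[OF s solt, of 0 t] i q2 p2 by simp
  have per: "q (t + 4 * \<tau>) = q t" for t
    using anti[of t] anti[of "t + 2 * \<tau>"] by (simp add: algebra_simps)
  have qpos: "q t > 0" if "0 < t" "t < 2 * \<tau>" for t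
  proof (cases "t \<le> \<tau>")
    case True
    then show ?thesis using strict_mono_onD[OF smono, of 0 t] that i by simp
  next
    case False
    have "q 0 < q (2 * \<tau> - t)" using strict_mono_onD[OF smono, of 0 "2 * \<tau> - t"] that False by simp
    then have "q (2 * \<tau> - t) > 0" using i by simp
    then show ?thesis using sym[of t] by simp
  qed
  have qneg: "q t < 0" if "2 * \<tau> < t" "t < 4 * \<tau>" for t
    using qpos[of "t - 2 * \<tau>"] anti[of "t - 2 * \<tau>"] that by simp
  have sp: "smallest_period q = 4 * \<tau>"
    unfolding smallest_period_def
  proof (rule Least_equality)
    show "4 * \<tau> > 0 \<and> (\<forall>t. q (t + 4 * \<tau>) = q t)" using \<tau>pos per by simp
  next
    fix y assume y: "y > 0 \<and> (\<forall>t. q (t + y) = q t)"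
    show "4 * \<tau> \<le> y"
    proof (rule ccontr)
      assume "\<not> 4 * \<tau> \<le> y"
      then have y4: "y < 4 * \<tau>" by simp
      have qy: "q y = 0" using y i by (metis add_0)
      consider "y < 2 * \<tau>" | "y = 2 * \<tau>" | "y > 2 * \<tau>" by linarith
      then show False
      proof cases
        case 1 then show False using qpos[of y] qy y by simp
      next
        case 3 then show False using qneg[of y] qy y4 by simp
      next
        case 2
        have "q (\<tau> + y) = q \<tau>" using y by simp
        moreover have "q (\<tau> + y) < 0" using qneg[of "\<tau> + y"] 2 \<tau>pos by simp
        ultimately show False using A0 by (simp add: A_def)
      qed
    qed
  qed
  have sym': "\<forall>t. q t = q (2 * \<tau> - t)" using sym by blast
  have ppos': "\<forall>t. 0 \<le> t \<and> t < \<tau> \<longrightarrow> p t > 0" using ppos by blast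
  have "q \<tau> = A" by (simp add: A_def)
  then show ?thesis
    using \<tau>pos A0 A1 \<tau>0(2) gA ppos' sym' sp smono by blast
qed



lemma Wineq:
  fixes a a' v :: real
  assumes v: "0 \<le> v" "v < 1" and a: "0 < a" "a < a'" "a' < 1"
  shows "((1 - a' * v) ^ 4 - (1 - a') ^ 4) / a' < ((1 - a * v) ^ 4 - (1 - a) ^ 4) / a"
proof -
  define S where "S b = (1 - b * v) ^ 3 + (1 - b * v)\<^sup>2 * (1 - b) + (1 - b * v) * (1 - b)\<^sup>2 + (1 - b) ^ 3" for b :: real
  have id: "((1 - b * v) ^ 4 - (1 - b) ^ 4) / b = (1 - v) * S b" if "b > 0" for b
  proof -
    have "(1 - b * v) ^ 4 - (1 - b) ^ 4 = b * (1 - v) * S b"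
      by (simp add: S_def algebra_simps power2_eq_square power3_eq_cube power4_eq_xxxx)
    then show ?thesis using that by simp
  qed
  have x: "0 < 1 - a' * v" "1 - a' * v \<le> 1 - a * v"
  proof -
    have "a' * v \<le> 1 * v" using a v by (intro mult_right_mono) auto
    then show "0 < 1 - a' * v" using v by simp
    show "1 - a' * v \<le> 1 - a * v" using a v by (simp add: mult_right_mono)
  qed
  have y: "0 < 1 - a'" "1 - a' < 1 - a" using a by auto
  have "S a' < S a"
  proof -
    have "(1 - a' * v) ^ 3 \<le> (1 - a * v) ^ 3" using x by (intro power_mono) auto
    moreover have "(1 - a' * v)\<^sup>2 * (1 - a') \<le> (1 - a * v)\<^sup>2 * (1 - a)"
      using x y by (intro mult_mono power_mono) auto
    moreover have "(1 - a' * v) * (1 - a')\<^sup>2 \<le> (1 - a * v) * (1 - a)\<^sup>2"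
      using x y by (intro mult_mono power_mono) auto
    moreover have "(1 - a') ^ 3 < (1 - a) ^ 3" using y by (intro power_strict_mono) auto
    ultimately show ?thesis unfolding S_def by linarith
  qed
  then have "(1 - v) * S a' < (1 - v) * S a" using v by simp
  then show ?thesis using id[of a] id[of a'] a by simp
qed

lemma tau_lt:
  assumes s: "sol q p" "q 0 = 0" "p 0 = p0" and s': "sol q' p'" "q' 0 = 0" "p' 0 = p0'"
    and pp: "0 < p0" "p0 < p0'"
    and t: "0 < \<tau>" "0 < A" "A < 1" "q \<tau> = A" "p \<tau> = 0" "2 * g A = p0\<^sup>2"
       "\<And>t. 0 \<le> t \<Longrightarrow> t < \<tau> \<Longrightarrow> p t > 0" "strict_mono_on {0..\<tau>} q"
    and t': "0 < \<tau>'" "0 < A'" "A' < 1" "q' \<tau>' = A'" "p' \<tau>' = 0" "2 * g A' = p0'\<^sup>2"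
       "\<And>t. 0 \<le> t \<Longrightarrow> t < \<tau>' \<Longrightarrow> p' t > 0" "strict_mono_on {0..\<tau>'} q'"
  shows "\<tau> < \<tau>'"
proof -
  have dq: "(q has_real_derivative p t) (at t)" for t using s by (simp add: sol_def)
  have dp: "(p has_real_derivative - G (q t)) (at t)" for t using s by (simp add: sol_def)
  have dq': "(q' has_real_derivative p' t) (at t)" for t using s' by (simp add: sol_def)
  have dp': "(p' has_real_derivative - G (q' t)) (at t)" for t using s' by (simp add: sol_def)
  have gf: "g x = 1 - (1 - x\<^sup>2) ^ 4" if "\<bar>x\<bar> < 1" for x using that by (simp add: g_def)
  have AA: "A < A'"
  proof (rule ccontr)
    assume "\<not> A < A'"
    then have "A' \<le> A" by simp
    then have "A'\<^sup>2 \<le> A\<^sup>2" using t' by (intro power_mono) auto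
    moreover have "A\<^sup>2 \<le> 1" using t by (simp add: abs_square_le_1)
    ultimately have "(1 - A\<^sup>2) ^ 4 \<le> (1 - A'\<^sup>2) ^ 4" by (intro power_mono) auto
    then have "g A' \<le> g A" using gf[of A] gf[of A'] t t' by simp
    moreover have "p0\<^sup>2 < p0'\<^sup>2" using pp by (simp add: power_strict_mono)
    ultimately show False using t(6) t'(6) by simp
  qed
  define d where "d x = q x / A - q' x / A'" for x
  define d' where "d' x = p x / A - p' x / A'" for x
  have dd: "(d has_real_derivative d' x) (at x)" for x
    unfolding d_def d'_def using dq dq' t(2) t'(2) by (auto intro!: derivative_eq_intros)
  have dd': "(d' has_real_derivative - G (q x) / A + G (q' x) / A') (at x)" for x
    unfolding d'_def using dp dp' t(2) t'(2) by (auto intro!: derivative_eq_intros)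
  have cd: "isCont d x" for x using dd DERIV_isCont by blast
  define b where "b = min \<tau> \<tau>'"
  have b: "0 < b" "b \<le> \<tau>" "b \<le> \<tau>'" using t t' by (auto simp: b_def)
  have dpos: "d x > 0" if "0 < x" "x < b" for x
  proof (rule touch[OF dd b(1) _ _ that])
    show "d 0 = 0" using s s' by (simp add: d_def)
    fix x assume x: "0 \<le> x" "x < b" "d x = 0"
    define u where "u = q x / A"
    have qx: "q x = A * u" using t by (simp add: u_def)
    have qx': "q' x = A' * u" using t' x(3) by (simp add: u_def d_def)
    have "q 0 \<le> q x" using strict_mono_onD[OF t(8), of 0 x] x b t by (cases "x = 0") auto
    then have u0: "u \<ge> 0" using s t by (simp add: u_def)
    have "q x < q \<tau>" using strict_mono_onD[OF t(8), of x \<tau>] x b by simp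
    then have u1: "u < 1" using t by (simp add: u_def)
    have uu: "u\<^sup>2 < 1" "0 \<le> u\<^sup>2" using u0 u1 by (auto simp: abs_square_less_1)
    have "A * u \<le> A" "A' * u \<le> A'" using u0 u1 t t' by (simp_all add: mult_left_le)
    moreover have "0 \<le> A * u" "0 \<le> A' * u" using u0 t t' by simp_all
    ultimately have Au: "\<bar>A * u\<bar> < 1" "\<bar>A' * u\<bar> < 1" using t(3) t'(3) by simp_all
    have e1: "(p x)\<^sup>2 = 2 * ((1 - A\<^sup>2 * u\<^sup>2) ^ 4 - (1 - A\<^sup>2) ^ 4)"
      using energy0[OF s, of x] t(6) gf[OF Au(1)] gf[of A] t qx by (simp add: power_mult_distrib)
    have e2: "(p' x)\<^sup>2 = 2 * ((1 - A'\<^sup>2 * u\<^sup>2) ^ 4 - (1 - A'\<^sup>2) ^ 4)"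
      using energy0[OF s', of x] t'(6) gf[OF Au(2)] gf[of A'] t' qx' by (simp add: power_mult_distrib)
    have a: "0 < A\<^sup>2" "A\<^sup>2 < A'\<^sup>2" "A'\<^sup>2 < 1" using t t' AA
      by (auto intro: power_strict_mono simp: abs_square_less_1)
    have W: "((1 - A'\<^sup>2 * u\<^sup>2) ^ 4 - (1 - A'\<^sup>2) ^ 4) / A'\<^sup>2 < ((1 - A\<^sup>2 * u\<^sup>2) ^ 4 - (1 - A\<^sup>2) ^ 4) / A\<^sup>2"
      by (rule Wineq[OF uu(2) uu(1) a])
    have f1: "(p x / A)\<^sup>2 = 2 * (((1 - A\<^sup>2 * u\<^sup>2) ^ 4 - (1 - A\<^sup>2) ^ 4) / A\<^sup>2)"
      by (simp only: power_divide e1 times_divide_eq_right)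
    have f2: "(p' x / A')\<^sup>2 = 2 * (((1 - A'\<^sup>2 * u\<^sup>2) ^ 4 - (1 - A'\<^sup>2) ^ 4) / A'\<^sup>2)"
      by (simp only: power_divide e2 times_divide_eq_right)
    have "(p' x / A')\<^sup>2 < (p x / A)\<^sup>2"
      unfolding f1 f2 using W by linarith
    moreover have "p x / A > 0" using t(7)[of x] x b t by simp
    ultimately have "p' x / A' < p x / A" by (rule power2_less_imp_less[OF _ less_imp_le])
    then show "d' x > 0" by (simp add: d'_def)
  qed
  show ?thesis
  proof (rule ccontr)
    assume "\<not> \<tau> < \<tau>'"
    then consider "\<tau>' < \<tau>" | "\<tau>' = \<tau>" by linarith
    then show False
    proof cases
      case 1
      then have bb: "b = \<tau>'" by (simp add: b_def)
      have "q \<tau>' < q \<tau>" using strict_mono_onD[OF t(8), of \<tau>' \<tau>] 1 t' by simp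
      then have "d \<tau>' < 0" using t t' by (simp add: d_def)
      then obtain e where e: "e > 0" "\<And>y. \<bar>y - \<tau>'\<bar> < e \<Longrightarrow> d y < 0" using cont_neg[OF cd] by blast
      define h where "h = min e \<tau>'"
      have h: "0 < h" "h \<le> e" "h \<le> \<tau>'" using e t' by (auto simp: h_def)
      have "d (\<tau>' - h / 2) < 0" using e(2)[of "\<tau>' - h / 2"] h by simp
      moreover have "d (\<tau>' - h / 2) > 0" using dpos[of "\<tau>' - h / 2"] h bb by simp
      ultimately show False by simp
    next
      case 2
      then have bb: "b = \<tau>" by (simp add: b_def)
      have d0: "d \<tau> = 0" "d' \<tau> = 0" using t t' 2 by (simp_all add: d_def d'_def)
      have "(1 - A'\<^sup>2) ^ 3 < (1 - A\<^sup>2) ^ 3"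
      proof (rule power_strict_mono)
        show "1 - A'\<^sup>2 < 1 - A\<^sup>2" using t AA by (simp add: power_strict_mono)
        show "0 \<le> 1 - A'\<^sup>2" using t' by (simp add: abs_square_le_1)
      qed simp
      moreover have "G (q \<tau>) / A = 8 * (1 - A\<^sup>2) ^ 3" using t by (simp add: G_def)
      moreover have "G (q' \<tau>) / A' = 8 * (1 - A'\<^sup>2) ^ 3" using t' 2 by (simp add: G_def)
      ultimately have neg: "- G (q \<tau>) / A + G (q' \<tau>) / A' < 0" by simp
      obtain e where e: "e > 0" "\<And>h. h > 0 \<Longrightarrow> h < e \<Longrightarrow> d' \<tau> < d' (\<tau> - h)"
        using DERIV_neg_dec_left[OF dd' neg] by blast
      define h where "h = min e \<tau> / 2"
      have h: "0 < h" "h < e" "h < \<tau>" using e t by (auto simp: h_def)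
      have "d (\<tau> - h) < d \<tau>"
      proof (rule DERIV_pos_imp_increasing_open[of "\<tau> - h" \<tau> d])
        show "\<tau> - h < \<tau>" using h by simp
        fix z assume z: "\<tau> - h < z" "z < \<tau>"
        have "d' \<tau> < d' (\<tau> - (\<tau> - z))" using e(2)[of "\<tau> - z"] z h by simp
        then show "\<exists>y. (d has_real_derivative y) (at z) \<and> 0 < y" using dd[of z] d0 by auto
      next
        show "continuous_on {\<tau> - h..\<tau>} d" by (simp add: continuous_at_imp_continuous_on cd)
      qed
      moreover have "d (\<tau> - h) > 0" using dpos[of "\<tau> - h"] h bb by simp
      ultimately show False using d0 by simp
    qed
  qed
qed



theorem lemma5p15:
  fixes p0 p0' :: real and q p q' p' :: "real \<Rightarrow> real"
  assumes "0 < p0" "p0 < p0'" "p0' < 2"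
    and "is_global_solution p0 q p"
    and "is_global_solution p0' q' p'"
  shows "(p0 < sqrt 2 \<longrightarrow> (\<forall>t. 0 < t \<and> t \<le> smallest_period q / 2 \<longrightarrow> q t < q' t))
       \<and> (sqrt 2 \<le> p0 \<longrightarrow> (\<forall>t. 0 < t \<longrightarrow> q t < q' t))"
proof -
  have s: "sol q p" "q 0 = 0" "p 0 = p0" using global_sol[OF assms(4)] by auto
  have s': "sol q' p'" "q' 0 = 0" "p' 0 = p0'" using global_sol[OF assms(5)] by auto
  have p0': "0 < p0'" using assms by simp
  have sq2: "(sqrt 2)\<^sup>2 = (2::real)" by simp
  have allpos: "q t < q' t" if "2 \<le> p0'\<^sup>2" "0 < t" for t
  proof -
    have "\<And>x. p' x > 0" using p_pos_above[OF s' that(1) p0'] .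
    then show ?thesis using cmp[OF s s' assms(1,2), of "t + 1" t] that by simp
  qed
  have part1: "\<forall>t. 0 < t \<and> t \<le> smallest_period q / 2 \<longrightarrow> q t < q' t" if lt: "p0 < sqrt 2"
  proof (intro allI impI)
    fix t assume tt: "0 < t \<and> t \<le> smallest_period q / 2"
    have "p0\<^sup>2 < (sqrt 2)\<^sup>2" using lt assms(1) by (intro power_strict_mono) auto
    then have p02: "p0\<^sup>2 < 2" by simp
    show "q t < q' t"
    proof (cases "2 \<le> p0'\<^sup>2")
      case True
      then show ?thesis using allpos tt by blast
    next
      case False
      then have p02': "p0'\<^sup>2 < 2" by simp
      obtain \<tau> A where T: "0 < \<tau>" "0 < A" "A < 1" "q \<tau> = A" "p \<tau> = 0" "2 * g A = p0\<^sup>2"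
        "\<forall>t. 0 \<le> t \<and> t < \<tau> \<longrightarrow> p t > 0" "\<forall>t. q t = q (2 * \<tau> - t)"
        "smallest_period q = 4 * \<tau>" "strict_mono_on {0..\<tau>} q"
        using below[OF s assms(1) p02] by blast
      obtain \<tau>' A' where T': "0 < \<tau>'" "0 < A'" "A' < 1" "q' \<tau>' = A'" "p' \<tau>' = 0" "2 * g A' = p0'\<^sup>2"
        "\<forall>t. 0 \<le> t \<and> t < \<tau>' \<longrightarrow> p' t > 0" "\<forall>t. q' t = q' (2 * \<tau>' - t)"
        "smallest_period q' = 4 * \<tau>'" "strict_mono_on {0..\<tau>'} q'"
        using below[OF s' p0' p02'] by blast
      have lt\<tau>: "\<tau> < \<tau>'"
        by (rule tau_lt[OF s s' assms(1,2) T(1-6) _ T(10) T'(1-6) _ T'(10)]) (use T(7) T'(7) in auto)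
      have c: "q x < q' x" if "0 < x" "x < \<tau>'" for x
        by (rule cmp[OF s s' assms(1,2) T'(1) _ that]) (use T'(7) in auto)
      have t2: "t \<le> 2 * \<tau>" using tt T(9) by simp
      show ?thesis
      proof (cases "t < \<tau>'")
        case True
        then show ?thesis using c tt by blast
      next
        case False
        define r where "r = 2 * \<tau> - t"
        define r' where "r' = 2 * \<tau>' - t"
        have r: "0 \<le> r" "r < \<tau>" "r < r'" "r' \<le> \<tau>'" using False t2 lt\<tau> by (auto simp: r_def r'_def)
        have "q t = q r" using T(8) by (simp add: r_def)
        moreover have "q' t = q' r'" using T'(8) by (simp add: r'_def)
        moreover have "q' r < q' r'" using strict_mono_onD[OF T'(10), of r r'] r by simp
        moreover have "q r \<le> q' r"
        proof (cases "r = 0")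
          case True then show ?thesis using s s' by simp
        next
          case False then show ?thesis using c[of r] r lt\<tau> by simp
        qed
        ultimately show ?thesis by simp
      qed
    qed
  qed
  have part2: "\<forall>t. 0 < t \<longrightarrow> q t < q' t" if ge: "sqrt 2 \<le> p0"
  proof (intro allI impI)
    fix t :: real assume "0 < t"
    have "(sqrt 2)\<^sup>2 \<le> p0\<^sup>2" using ge by (intro power_mono) auto
    then have "2 \<le> p0\<^sup>2" by simp
    moreover have "p0\<^sup>2 < p0'\<^sup>2" using assms by (intro power_strict_mono) auto
    ultimately show "q t < q' t" using allpos \<open>0 < t\<close> by simp
  qed
  show ?thesis using part1 part2 by blast
qed


end
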